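(* Let $t$ be the Thue-Morse word. For every $n\geq 1$, we have $PPL_t(n)=PPL^0_t(4n)\geq PPL_t(4n)$.
   Context: The Thue-Morse word $t=t[1]t[2]\cdots$ is the fixed point starting with $a$ of the morphism $\tau: a\mapsto abba,\ b\mapsto baab$. For $0\le i\le j$, $t(i..j]$ denotes the factor $t[i+1]\cdots t[j]$. A palindrome is a word $p=p[1]\cdots p[n]$ with $p[i]=p[n-i+1]$ for all $i$. $PPL_t(n)$ is the minimal number of nonempty palindromes whose concatenation equals the prefix $t(0..n]$. A decomposition $t(0..4n]=t(e_0..e_1]t(e_1..e_2]\cdots t(e_{k-1}..e_k]$ with $0=e_0<e_1<\cdots<e_k=4n$ into palindromes is called a $0$-decomposition if every $e_i$ is divisible by $4$; $PPL^0_t(4n)$ is the minimal number of palindromes in a $0$-decomposition of $t(0..4n]$. *)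

theory Defs
  imports Main
begin

datatype letter = A | B

fun tau :: "letter \<Rightarrow> letter list" where
  "tau A = [A, B, B, A]"
| "tau B = [B, A, A, B]"

text \<open>The fixed point of tau starting with a, 0-indexed: position n (0-based) of the word
  is letter (n mod 4) of tau applied to the letter at position (n div 4). So tm0 k = t[k+1].\<close>
function tm0 :: "nat \<Rightarrow> letter" where
  "tm0 n = (if n = 0 then A else tau (tm0 (n div 4)) ! (n mod 4))"
  by auto
termination
  by (relation "measure id") auto

definition t :: "nat \<Rightarrow> letter" where
  "t i = tm0 (i - 1)"

text \<open>The factor t(i..j] = t[i+1] ... t[j].\<close>
definition factor :: "nat \<Rightarrow> nat \<Rightarrow> letter list" where
  "factor i j = map t [Suc i..<Suc j]"

definition palindrome :: "'a list \<Rightarrow> bool" where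
  "palindrome p \<longleftrightarrow> (\<forall>i\<in>{1..length p}. p ! (i - 1) = p ! (length p - i))"

definition pal_decomp :: "nat \<Rightarrow> nat \<Rightarrow> (nat \<Rightarrow> nat) \<Rightarrow> bool" where
  "pal_decomp m k e \<longleftrightarrow> e 0 = 0 \<and> e k = m \<and> (\<forall>i<k. e i < e (Suc i)) \<and>
     (\<forall>i<k. palindrome (factor (e i) (e (Suc i))))"

definition PPL :: "nat \<Rightarrow> nat" where
  "PPL m = (LEAST k. \<exists>e. pal_decomp m k e)"

text \<open>0-decompositions: all cut points divisible by 4. PPL0 m is meant for m = 4n.\<close>
definition PPL0 :: "nat \<Rightarrow> nat" where
  "PPL0 m = (LEAST k. \<exists>e. pal_decomp m k e \<and> (\<forall>i\<le>k. 4 dvd e i))"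

end

theory Submission
  imports Defs
begin

lemma pal_rev: "palindrome p \<longleftrightarrow> rev p = p"
proof
  assume h: "palindrome p"
  show "rev p = p"
  proof (rule nth_equalityI)
    fix k assume k: "k < length (rev p)"
    hence "Suc k \<in> {1..length p}" by auto
    with h have "p ! k = p ! (length p - Suc k)" unfolding palindrome_def by fastforce
    thus "rev p ! k = p ! k" using k by (simp add: rev_nth)
  qed simp
next
  assume h: "rev p = p"
  show "palindrome p" unfolding palindrome_def
  proof
    fix i assume i: "i \<in> {1..length p}"
    then obtain k where k: "i = Suc k" "k < length p" by (cases i) auto
    have "rev p ! (i - 1) = p ! (length p - i)" using k by (simp add: rev_nth)
    thus "p ! (i - 1) = p ! (length p - i)" using h i by simp
  qed
qed

lemma tau_pal: "rev (tau x) = tau x" by (cases x) auto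
lemma tau_len: "length (tau x) = 4" by (cases x) auto

lemma tau_rev: "rev (concat (map tau w)) = concat (map tau (rev w))"
  by (induction w) (auto simp: tau_pal)

lemma tau_inj: "concat (map tau u) = concat (map tau v) \<Longrightarrow> length u = length v \<Longrightarrow> u = v"
proof (induction u arbitrary: v)
  case Nil then show ?case by simp
next
  case (Cons x u)
  then obtain y v' where v: "v = y # v'" by (cases v) auto
  have "tau x @ concat (map tau u) = tau y @ concat (map tau v')" using Cons.prems v by simp
  hence "tau x = tau y" "concat (map tau u) = concat (map tau v')"
    by (simp_all add: append_eq_append_conv tau_len)
  hence "x = y" by (cases x; cases y) auto
  with Cons.IH[of v'] Cons.prems v \<open>concat (map tau u) = concat (map tau v')\<close> show ?case by simp
qed

lemma pal_tau: "palindrome (concat (map tau w)) \<longleftrightarrow> palindrome w"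
  unfolding pal_rev tau_rev using tau_inj[of "rev w" w] by auto

lemma tm_step: "r < 4 \<Longrightarrow> tm0 (4*j + r) = tau (tm0 j) ! r"
proof (cases "4*j+r = 0")
  case True
  assume "r < 4"
  then show ?thesis using True by simp
next
  case False
  assume "r < 4"
  then show ?thesis using False by (subst tm0.simps) simp
qed

lemma tau_list: "tau x = [tau x ! 0, tau x ! 1, tau x ! 2, tau x ! 3]" by (cases x) auto

lemma block_el: "r < 4 \<Longrightarrow> t (Suc (4*j+r)) = tau (tm0 j) ! r"
  using tm_step[of r j] by (simp add: t_def)

lemma block: "map t [Suc (4*j)..<Suc (4*j+4)] = tau (t (Suc j))"
proof -
  have "[Suc (4*j)..<Suc (4*j+4)] = [Suc (4*j+0), Suc(4*j+1), Suc(4*j+2), Suc(4*j+3)]"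
    by (simp add: upt_rec)
  hence "map t [Suc (4*j)..<Suc (4*j+4)] = [t (Suc (4*j+0)), t (Suc(4*j+1)), t (Suc(4*j+2)), t (Suc(4*j+3))]"
    by (simp only: list.map)
  also have "\<dots> = [tau (tm0 j) ! 0, tau (tm0 j) ! 1, tau (tm0 j) ! 2, tau (tm0 j) ! 3]"
    using block_el[of 0 j] block_el[of 1 j] block_el[of 2 j] block_el[of 3 j] by simp
  also have "\<dots> = tau (tm0 j)" using tau_list[of "tm0 j"] by simp
  finally show ?thesis by (simp add: t_def)
qed

lemma upt4: "a \<le> b \<Longrightarrow> [a..<b+4] = [a..<b] @ [b..<b+4]"
  using upt_add_eq_append[of a b 4] by simp

lemma factor4: "i \<le> j \<Longrightarrow> factor (4*i) (4*j) = concat (map tau (factor i j))"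
proof (induction j rule: dec_induct)
  case base then show ?case by (simp add: factor_def)
next
  case (step j)
  have "Suc (4*Suc j) = Suc (4*j) + 4" by simp
  hence "factor (4*i) (4*Suc j) = map t ([Suc (4*i)..<Suc (4*j)] @ [Suc (4*j)..<Suc (4*j)+4])"
    unfolding factor_def using step.hyps upt4[of "Suc (4*i)" "Suc (4*j)"] by simp
  also have "\<dots> = factor (4*i) (4*j) @ map t [Suc (4*j)..<Suc (4*j+4)]"
    unfolding factor_def by simp
  also have "\<dots> = concat (map tau (factor i j)) @ tau (t (Suc j))" using step.IH block by simp
  also have "\<dots> = concat (map tau (factor i (Suc j)))"
    using step.hyps by (simp add: factor_def)
  finally show ?case .
qed

lemma dec_up: "pal_decomp n k e \<Longrightarrow> pal_decomp (4*n) k (\<lambda>i. 4 * e i)"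
  unfolding pal_decomp_def using factor4 pal_tau less_imp_le by (simp add: factor4 pal_tau less_imp_le)

lemma dec_down:
  assumes "pal_decomp (4*n) k e" "\<forall>i\<le>k. 4 dvd e i"
  shows "pal_decomp n k (\<lambda>i. e i div 4)"
proof -
  have ee: "e i = 4 * (e i div 4)" if "i \<le> k" for i using assms(2) that by auto
  have e0: "e 0 = 0" and ek: "e k = 4*n" and mono: "\<forall>i<k. e i < e (Suc i)"
    and pal: "\<forall>i<k. palindrome (factor (e i) (e (Suc i)))" using assms(1) unfolding pal_decomp_def by auto
  show ?thesis unfolding pal_decomp_def
  proof (intro conjI allI impI)
    show "e 0 div 4 = 0" using e0 by simp
    show "e k div 4 = n" using ek by simp
  next
    fix i assume i: "i < k"
    have a: "e i = 4 * (e i div 4)" "e (Suc i) = 4 * (e (Suc i) div 4)" using ee i by auto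
    have "e i < e (Suc i)" using mono i by blast
    then show "e i div 4 < e (Suc i) div 4" using a by (metis mult_less_cancel1)
    hence "factor (e i) (e (Suc i)) = concat (map tau (factor (e i div 4) (e (Suc i) div 4)))"
      using a factor4 by (metis less_imp_le)
    thus "palindrome (factor (e i div 4) (e (Suc i) div 4))" using pal i pal_tau by metis
  qed
qed

lemma dec_triv: "pal_decomp n n id"
  unfolding pal_decomp_def factor_def palindrome_def by auto

theorem proposition7:
  fixes n :: nat
  assumes "n \<ge> 1"
  shows "PPL n = PPL0 (4 * n) \<and> PPL0 (4 * n) \<ge> PPL (4 * n)"
proof -
  have eq: "(\<lambda>k. \<exists>e. pal_decomp n k e) = (\<lambda>k. \<exists>e. pal_decomp (4*n) k e \<and> (\<forall>i\<le>k. 4 dvd e i))"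
  proof (intro ext iffI)
    fix k assume "\<exists>e. pal_decomp n k e"
    then obtain e where "pal_decomp n k e" by blast
    thus "\<exists>e. pal_decomp (4*n) k e \<and> (\<forall>i\<le>k. 4 dvd e i)" using dec_up by fastforce
  next
    fix k assume "\<exists>e. pal_decomp (4*n) k e \<and> (\<forall>i\<le>k. 4 dvd e i)"
    thus "\<exists>e. pal_decomp n k e" using dec_down by blast
  qed
  have 1: "PPL n = PPL0 (4*n)" unfolding PPL_def PPL0_def eq ..
  have ex: "\<exists>k e. pal_decomp (4*n) k e \<and> (\<forall>i\<le>k. 4 dvd e i)"
    using dec_triv[of n] eq by metis
  then obtain e where "pal_decomp (4*n) (PPL0 (4*n)) e"
    unfolding PPL0_def using LeastI_ex[OF ex] by blast
  hence "PPL (4*n) \<le> PPL0 (4*n)" unfolding PPL_def using Least_le[of "\<lambda>k. \<exists>e. pal_decomp (4*n) k e"] by blast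
  with 1 show ?thesis by simp
qed

end
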